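(* Let $i,j,k\ge 0$. Each permutation of one of the forms $21\ominus(\delta_j\oplus\delta_k)$, $\delta_i\ominus(1\oplus\delta_k)$, or $\delta_i\ominus(\delta_j\oplus 1)$ is shallow.
   Context: For $\pi\in S_n$: $D(\pi)=\sum_{i}|\pi_i-i|$, $I(\pi)$ is the number of inversions, $T(\pi)=n-\mathrm{cyc}(\pi)$ with $\mathrm{cyc}$ the number of cycles in the disjoint cycle decomposition; $\pi$ is shallow if $I(\pi)+T(\pi)=D(\pi)$. $\delta_m=m(m-1)\cdots21\in S_m$ is the decreasing permutation ($\delta_0$ is the empty permutation), and $1$ denotes the permutation of length one. For $\alpha\in S_a$, $\beta\in S_b$, the direct sum $\alpha\oplus\beta\in S_{a+b}$ is $\alpha_1\cdots\alpha_a(\beta_1+a)\cdots(\beta_b+a)$ and the skew sum $\alpha\ominus\beta\in S_{a+b}$ is $(\alpha_1+b)\cdots(\alpha_a+b)\beta_1\cdots\beta_b$. *)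

theory Defs
  imports Main
begin

text \<open>Permutations of [n] = {1..n} in one-line notation, as lists: the list xs
  represents pi with pi_i = xs ! (i - 1).\<close>

definition perm_fun :: "nat list \<Rightarrow> nat \<Rightarrow> nat" where
  "perm_fun xs i = xs ! (i - 1)"

definition Dsum :: "nat list \<Rightarrow> int" where
  "Dsum xs = (\<Sum>i = 1..length xs. \<bar>int (perm_fun xs i) - int i\<bar>)"

definition Inv :: "nat list \<Rightarrow> nat" where
  "Inv xs = card {(i, j). 1 \<le> i \<and> i < j \<and> j \<le> length xs \<and> perm_fun xs i > perm_fun xs j}"

definition cyc :: "nat list \<Rightarrow> nat" where
  "cyc xs = card ({1..length xs} //
     {(a, b). a \<in> {1..length xs} \<and> b \<in> {1..length xs} \<and> (\<exists>k. (perm_fun xs ^^ k) a = b)})"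

definition Tcyc :: "nat list \<Rightarrow> int" where
  "Tcyc xs = int (length xs) - int (cyc xs)"

definition shallow :: "nat list \<Rightarrow> bool" where
  "shallow xs \<longleftrightarrow> int (Inv xs) + Tcyc xs = Dsum xs"

definition delta :: "nat \<Rightarrow> nat list" where
  "delta m = rev [1..<m+1]"

definition direct_sum :: "nat list \<Rightarrow> nat list \<Rightarrow> nat list" (infixl "\<oplus>\<^sub>p" 65) where
  "\<alpha> \<oplus>\<^sub>p \<beta> = \<alpha> @ map (\<lambda>x. x + length \<alpha>) \<beta>"

definition skew_sum :: "nat list \<Rightarrow> nat list \<Rightarrow> nat list" (infixl "\<ominus>\<^sub>p" 65) where
  "\<alpha> \<ominus>\<^sub>p \<beta> = map (\<lambda>x. x + length \<beta>) \<alpha> @ \<beta>"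

end

theory Submission
  imports Defs
begin


definition orbS :: "nat set \<Rightarrow> (nat \<Rightarrow> nat) \<Rightarrow> (nat \<times> nat) set" where
  "orbS S f = {(a,b). a \<in> S \<and> b \<in> S \<and> (\<exists>k. (f ^^ k) a = b)}"

definition perm_on :: "nat set \<Rightarrow> (nat \<Rightarrow> nat) \<Rightarrow> bool" where
  "perm_on S f \<longleftrightarrow> f ` S \<subseteq> S \<and> inj_on f S"

lemma fp_add: "(f ^^ (m+n)) a = (f ^^ m) ((f ^^ n) a)" by (simp add: funpow_add)

lemma funpow_in: "f ` S \<subseteq> S \<Longrightarrow> a \<in> S \<Longrightarrow> (f ^^ k) a \<in> S"
  by (induction k) auto

lemma funpow_inj: "f ` S \<subseteq> S \<Longrightarrow> inj_on f S \<Longrightarrow> inj_on (f ^^ k) S"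
proof (induction k)
  case 0 then show ?case by simp
next
  case (Suc k)
  have "inj_on (f \<circ> (f ^^ k)) S"
    apply (rule comp_inj_on) using Suc funpow_in[of f S _ k]
    by (auto intro: inj_on_subset)
  then show ?case by (simp add: funpow_Suc_right[symmetric] comp_def)
qed

lemma funpow_period:
  assumes "finite S" "perm_on S f" "a \<in> S"
  shows "\<exists>p>0. (f ^^ p) a = a"
proof -
  have sub: "f ` S \<subseteq> S" and inj: "inj_on f S" using assms(2) by (auto simp: perm_on_def)
  have "\<not> inj_on (\<lambda>t. (f ^^ t) a) {0..card S}"
  proof
    assume "inj_on (\<lambda>t. (f ^^ t) a) {0..card S}"
    then have "card ((\<lambda>t. (f ^^ t) a) ` {0..card S}) = card {0..card S}" by (rule card_image)
    moreover have "(\<lambda>t. (f ^^ t) a) ` {0..card S} \<subseteq> S" using funpow_in[OF sub assms(3)] by auto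
    ultimately have "card {0..card S} \<le> card S" using card_mono[OF assms(1)] by metis
    then show False by simp
  qed
  then obtain s t where st: "s \<in> {0..card S}" "t \<in> {0..card S}" "s \<noteq> t" "(f ^^ s) a = (f ^^ t) a"
    unfolding inj_on_def by blast
  then obtain u v where uv: "u < v" "(f ^^ u) a = (f ^^ v) a"
  proof (cases "s < t")
    case True then show ?thesis using that st by blast
  next
    case False then have "t < s" using st(3) by simp
    then show ?thesis using that st by metis
  qed
  have "(f ^^ v) a = (f ^^ u) ((f ^^ (v - u)) a)"
    using uv(1) fp_add[of u "v - u" f a] by simp
  then have "(f ^^ u) a = (f ^^ u) ((f ^^ (v - u)) a)" using uv by simp
  then have "a = (f ^^ (v - u)) a"
    using funpow_inj[OF sub inj, of u] funpow_in[OF sub assms(3)] assms(3)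
    unfolding inj_on_def by blast
  then show ?thesis using uv(1) by (intro exI[of _ "v - u"]) auto
qed

lemma orbS_equiv:
  assumes "finite S" "perm_on S f"
  shows "equiv S (orbS S f)"
proof (rule equivI)
  show "orbS S f \<subseteq> S \<times> S" unfolding orbS_def by auto
  show "refl_on S (orbS S f)" unfolding refl_on_def orbS_def
    by (auto intro: exI[of _ 0])
  show "trans (orbS S f)" unfolding trans_def orbS_def
  proof (clarsimp)
    fix a k m assume "a \<in> S" "(f ^^ k) a \<in> S" "(f ^^ m) ((f ^^ k) a) \<in> S"
    then show "\<exists>n. (f ^^ n) a = (f ^^ m) ((f ^^ k) a)" using fp_add[of m k f a] by blast
  qed
  show "sym (orbS S f)" unfolding sym_def orbS_def
  proof (clarsimp)
    fix a k assume a: "a \<in> S" and b: "(f ^^ k) a \<in> S"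
    obtain p where p: "p > 0" "(f ^^ p) a = a" using funpow_period[OF assms a] by blast
    have pk: "(f ^^ (p * k)) a = a"
    proof -
      have "\<And>m. (f ^^ (p * m)) a = a"
      proof -
        fix m show "(f ^^ (p * m)) a = a"
          by (induction m) (simp_all add: funpow_add p(2))
      qed
      then show ?thesis .
    qed
    have "(f ^^ (p * k - k)) ((f ^^ k) a) = (f ^^ (p * k)) a"
      using p(1) fp_add[of "p*k-k" k f a] by simp
    then show "\<exists>m. (f ^^ m) ((f ^^ k) a) = a" using pk by metis
  qed
qed

lemma restr_class:
  assumes "equiv S R" "a \<in> S - {x}"
  shows "(R \<inter> ((S-{x}) \<times> (S-{x}))) `` {a} = R `` {a} - {x}"
  using assms unfolding equiv_def refl_on_def by auto

lemma quot_remove_single: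
  assumes eq: "equiv S R" and x: "x \<in> S" and cl: "R `` {x} = {x}" and fin: "finite S"
  shows "card (S // R) = card ((S-{x}) // (R \<inter> ((S-{x}) \<times> (S-{x})))) + 1"
proof -
  let ?S' = "S - {x}" let ?R' = "R \<inter> (?S' \<times> ?S')"
  have cls: "R `` {a} = ?R' `` {a}" if "a \<in> ?S'" for a
  proof -
    have "x \<notin> R `` {a}"
    proof
      assume "x \<in> R `` {a}"
      then have "(a, x) \<in> R" by simp
      then have "(x, a) \<in> R" using eq unfolding equiv_def sym_def by blast
      then have "a \<in> R `` {x}" by simp
      then show False using cl that by simp
    qed
    then show ?thesis using restr_class[OF eq that] by simp
  qed
  have "S // R = insert {x} (?S' // ?R')"
  proof -
    have "S // R = insert (R `` {x}) ((\<lambda>a. R `` {a}) ` ?S')"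
      unfolding quotient_def using x by auto
    also have "(\<lambda>a. R `` {a}) ` ?S' = ?S' // ?R'"
      unfolding quotient_def using cls by auto
    finally show ?thesis using cl by simp
  qed
  moreover have "{x} \<notin> ?S' // ?R'"
  proof
    assume "{x} \<in> ?S' // ?R'"
    then obtain a where "a \<in> ?S'" "{x} = ?R' `` {a}" unfolding quotient_def by auto
    then show False by auto
  qed
  moreover have "finite (?S' // ?R')"
    by (rule finite_quotient) (use fin in auto)
  ultimately show ?thesis by simp
qed

lemma quot_remove_nonsingle:
  assumes eq: "equiv S R" and x: "x \<in> S" and cl: "R `` {x} \<noteq> {x}" and fin: "finite S"
  shows "card (S // R) = card ((S-{x}) // (R \<inter> ((S-{x}) \<times> (S-{x}))))"
proof -
  let ?S' = "S - {x}" let ?R' = "R \<inter> (?S' \<times> ?S')"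
  have xin: "x \<in> R `` {x}" using eq x unfolding equiv_def refl_on_def by auto
  obtain b where b: "b \<in> R `` {x}" "b \<noteq> x" using cl xin by blast
  have bS: "b \<in> ?S'" using b eq unfolding equiv_def by auto
  have clb: "R `` {b} = R `` {x}"
    using b(1) eq by (metis Image_singleton_iff equiv_class_eq equiv_class_eq_iff)
  have "bij_betw (\<lambda>A. A - {x}) (S // R) (?S' // ?R')"
  proof (rule bij_betw_imageI)
    show "inj_on (\<lambda>A. A - {x}) (S // R)"
    proof (rule inj_onI)
      fix A B assume A: "A \<in> S // R" and B: "B \<in> S // R" and AB: "A - {x} = B - {x}"
      obtain a where a: "a \<in> S - {x}" "A = R `` {a}"
      proof -
        obtain a0 where "a0 \<in> S" "A = R `` {a0}" using A unfolding quotient_def by auto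
        then show ?thesis using that bS clb by (cases "a0 = x") auto
      qed
      obtain c where c: "c \<in> S - {x}" "B = R `` {c}"
      proof -
        obtain a0 where "a0 \<in> S" "B = R `` {a0}" using B unfolding quotient_def by auto
        then show ?thesis using that bS clb by (cases "a0 = x") auto
      qed
      have "a \<in> A" using a eq unfolding equiv_def refl_on_def by auto
      then have "a \<in> B" using AB a by auto
      then show "A = B" using a c eq by (metis Image_singleton_iff equiv_class_eq)
    qed
  next
    show "(\<lambda>A. A - {x}) ` (S // R) = ?S' // ?R'"
    proof
      show "(\<lambda>A. A - {x}) ` (S // R) \<subseteq> ?S' // ?R'"
      proof
        fix C assume "C \<in> (\<lambda>A. A - {x}) ` (S // R)"
        then obtain a0 where a0: "a0 \<in> S" "C = R `` {a0} - {x}" unfolding quotient_def by auto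
        obtain a where a: "a \<in> ?S'" "C = R `` {a} - {x}"
          using a0 bS clb by (cases "a0 = x") auto
        then show "C \<in> ?S' // ?R'" using restr_class[OF eq a(1)] unfolding quotient_def by auto
      qed
    next
      show "?S' // ?R' \<subseteq> (\<lambda>A. A - {x}) ` (S // R)"
      proof
        fix C assume "C \<in> ?S' // ?R'"
        then obtain a where a: "a \<in> ?S'" "C = ?R' `` {a}" unfolding quotient_def by auto
        then have "C = R `` {a} - {x}" using restr_class[OF eq a(1)] by simp
        then show "C \<in> (\<lambda>A. A - {x}) ` (S // R)" using a unfolding quotient_def by auto
      qed
    qed
  qed
  then show ?thesis by (rule bij_betw_same_card)
qed

lemma quot_conj:
  assumes h: "bij_betw h S T" and R: "R \<subseteq> S \<times> S" and Q: "Q \<subseteq> T \<times> T"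
    and rel: "\<And>a b. a \<in> S \<Longrightarrow> b \<in> S \<Longrightarrow> (a, b) \<in> R \<longleftrightarrow> (h a, h b) \<in> Q"
  shows "card (S // R) = card (T // Q)"
proof -
  have cls: "Q `` {h a} = h ` (R `` {a})" if "a \<in> S" for a
  proof
    show "Q `` {h a} \<subseteq> h ` (R `` {a})"
    proof
      fix c assume "c \<in> Q `` {h a}"
      then have "c \<in> T" "(h a, c) \<in> Q" using Q by auto
      then obtain b where "b \<in> S" "c = h b" using h unfolding bij_betw_def by auto
      then show "c \<in> h ` (R `` {a})" using rel[OF that] \<open>(h a, c) \<in> Q\<close> by auto
    qed
    show "h ` (R `` {a}) \<subseteq> Q `` {h a}"
      using rel[OF that] R by auto
  qed
  have "bij_betw (\<lambda>A. h ` A) (S // R) (T // Q)"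
  proof (rule bij_betw_imageI)
    show "inj_on ((`) h) (S // R)"
    proof (rule inj_onI)
      fix A B assume "A \<in> S // R" "B \<in> S // R" "h ` A = h ` B"
      moreover have "A \<subseteq> S" "B \<subseteq> S" using calculation R unfolding quotient_def by auto
      ultimately show "A = B" using h unfolding bij_betw_def by (metis inj_on_image_eq_iff)
    qed
    show "(`) h ` (S // R) = T // Q"
    proof -
      have "(`) h ` (S // R) = (\<lambda>a. h ` (R `` {a})) ` S" unfolding quotient_def by auto
      also have "\<dots> = (\<lambda>a. Q `` {h a}) ` S" using cls by auto
      also have "\<dots> = (\<lambda>c. Q `` {c}) ` (h ` S)" by auto
      also have "\<dots> = T // Q" using h unfolding bij_betw_def quotient_def by auto
      finally show ?thesis .
    qed
  qed
  then show ?thesis by (rule bij_betw_same_card)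
qed

definition remf :: "nat \<Rightarrow> (nat \<Rightarrow> nat) \<Rightarrow> nat \<Rightarrow> nat" where
  "remf x f y = (if f y = x then f x else f y)"

lemma remf_perm:
  assumes p: "perm_on S f" and x: "x \<in> S"
  shows "perm_on (S - {x}) (remf x f)"
proof -
  have sub: "f ` S \<subseteq> S" and inj: "inj_on f S" using p by (auto simp: perm_on_def)
  have "remf x f ` (S - {x}) \<subseteq> S - {x}"
  proof
    fix z assume "z \<in> remf x f ` (S - {x})"
    then obtain y where y: "y \<in> S - {x}" "z = remf x f y" by auto
    show "z \<in> S - {x}"
    proof (cases "f y = x")
      case True
      then have "f x \<noteq> x" using inj y x unfolding inj_on_def by auto
      then show ?thesis using True y sub x by (auto simp: remf_def)
    next
      case False then show ?thesis using y sub by (auto simp: remf_def)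
    qed
  qed
  moreover have "inj_on (remf x f) (S - {x})"
  proof (rule inj_onI)
    fix y z assume y: "y \<in> S - {x}" and z: "z \<in> S - {x}" and e: "remf x f y = remf x f z"
    show "y = z"
    proof (cases "f y = x"; cases "f z = x")
      assume "f y = x" "f z = x" then show ?thesis using inj y z unfolding inj_on_def by auto
    next
      assume "f y = x" "f z \<noteq> x" then have "f x = f z" using e by (simp add: remf_def)
      then show ?thesis using inj z x unfolding inj_on_def by auto
    next
      assume "f y \<noteq> x" "f z = x" then have "f y = f x" using e by (simp add: remf_def)
      then show ?thesis using inj y x unfolding inj_on_def by auto
    next
      assume "f y \<noteq> x" "f z \<noteq> x" then have "f y = f z" using e by (simp add: remf_def)
      then show ?thesis using inj y z unfolding inj_on_def by auto
    qed
  qed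
  ultimately show ?thesis by (simp add: perm_on_def)
qed

lemma remf_orb:
  assumes p: "perm_on S f" and x: "x \<in> S"
  shows "orbS (S - {x}) (remf x f) = orbS S f \<inter> ((S - {x}) \<times> (S - {x}))"
proof -
  have sub: "f ` S \<subseteq> S" and inj: "inj_on f S" using p by (auto simp: perm_on_def)
  let ?g = "remf x f"
  have fw: "\<exists>k. (?g ^^ m) a = (f ^^ k) a" for m a
  proof (induction m)
    case 0 then show ?case by (auto intro: exI[of _ 0])
  next
    case (Suc m)
    then obtain k where k: "(?g ^^ m) a = (f ^^ k) a" by blast
    show ?case
    proof (cases "f ((f ^^ k) a) = x")
      case True
      then have "(?g ^^ Suc m) a = (f ^^ (Suc (Suc k))) a" using k by (simp add: remf_def)
      then show ?thesis by blast
    next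
      case False
      then have "(?g ^^ Suc m) a = (f ^^ (Suc k)) a" using k by (simp add: remf_def)
      then show ?thesis by blast
    qed
  qed
  have bw: "\<exists>m. (?g ^^ m) a = (if (f ^^ k) a = x then f x else (f ^^ k) a)"
    if a: "a \<in> S - {x}" for a k
  proof (induction k)
    case 0 then show ?case using a by (auto intro: exI[of _ 0])
  next
    case (Suc k)
    then obtain m where m: "(?g ^^ m) a = (if (f ^^ k) a = x then f x else (f ^^ k) a)" by blast
    show ?case
    proof (cases "(f ^^ k) a = x")
      case True
      then have "(f ^^ Suc k) a = f x" by simp
      then show ?thesis using m True by (cases "f x = x") auto
    next
      case False
      then show ?thesis
      proof (cases "(f ^^ Suc k) a = x")
        case True
        then have "(?g ^^ Suc m) a = f x" using m False by (simp add: remf_def)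
        then show ?thesis using True by metis
      next
        case F2: False
        then have "(?g ^^ Suc m) a = (f ^^ Suc k) a" using m False by (simp add: remf_def)
        then show ?thesis using F2 by metis
      qed
    qed
  qed
  show ?thesis
  proof
    show "orbS (S - {x}) ?g \<subseteq> orbS S f \<inter> ((S - {x}) \<times> (S - {x}))"
    proof
      fix ab assume "ab \<in> orbS (S - {x}) ?g"
      then obtain a b m where ab: "ab = (a, b)" "a \<in> S - {x}" "b \<in> S - {x}" "(?g ^^ m) a = b"
        unfolding orbS_def by auto
      then obtain k where "(f ^^ k) a = b" using fw[of m a] by metis
      then show "ab \<in> orbS S f \<inter> ((S - {x}) \<times> (S - {x}))" using ab unfolding orbS_def by auto
    qed
  next
    show "orbS S f \<inter> ((S - {x}) \<times> (S - {x})) \<subseteq> orbS (S - {x}) ?g"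
    proof
      fix ab assume "ab \<in> orbS S f \<inter> ((S - {x}) \<times> (S - {x}))"
      then obtain a b k where ab: "ab = (a, b)" "a \<in> S - {x}" "b \<in> S - {x}" "(f ^^ k) a = b"
        unfolding orbS_def by auto
      then obtain m where "(?g ^^ m) a = b" using bw[OF ab(2), of k] by auto
      then show "ab \<in> orbS (S - {x}) ?g" using ab unfolding orbS_def by auto
    qed
  qed
qed

lemma orb_class_single:
  assumes p: "perm_on S f" and x: "x \<in> S"
  shows "orbS S f `` {x} = {x} \<longleftrightarrow> f x = x"
proof
  assume "orbS S f `` {x} = {x}"
  moreover have "f x \<in> orbS S f `` {x}" using p x unfolding orbS_def perm_on_def
    by (auto intro: exI[of _ 1])
  ultimately show "f x = x" by auto
next
  assume fx: "f x = x"
  have "(f ^^ k) x = x" for k by (induction k) (simp_all add: fx)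
  then show "orbS S f `` {x} = {x}" using x unfolding orbS_def by auto
qed

lemma card_remove:
  assumes fin: "finite S" and p: "perm_on S f" and x: "x \<in> S"
  shows "card (S // orbS S f) = card ((S - {x}) // orbS (S - {x}) (remf x f)) + (if f x = x then 1 else 0)"
  using quot_remove_single[OF orbS_equiv[OF fin p] x _ fin]
    quot_remove_nonsingle[OF orbS_equiv[OF fin p] x _ fin]
    orb_class_single[OF p x] remf_orb[OF p x] by auto

lemma orb_conj:
  assumes g: "g ` S \<subseteq> S" and h: "bij_betw h S T" and c: "\<And>y. y \<in> S \<Longrightarrow> h (g y) = f (h y)"
    and a: "a \<in> S" and b: "b \<in> S"
  shows "(a, b) \<in> orbS S g \<longleftrightarrow> (h a, h b) \<in> orbS T f"
proof -
  have it: "h ((g ^^ k) a) = (f ^^ k) (h a)" for k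
  proof (induction k)
    case 0 then show ?case by simp
  next
    case (Suc k) then show ?case using c funpow_in[OF g a, of k] by simp
  qed
  have inj: "inj_on h S" using h by (simp add: bij_betw_def)
  have "(\<exists>k. (g ^^ k) a = b) \<longleftrightarrow> (\<exists>k. (f ^^ k) (h a) = h b)"
    using it funpow_in[OF g a] b inj unfolding inj_on_def by metis
  moreover have "h a \<in> T" "h b \<in> T" using a b h by (auto simp: bij_betw_def)
  ultimately show ?thesis using a b unfolding orbS_def by auto
qed

definition stdz :: "nat \<Rightarrow> nat \<Rightarrow> nat" where "stdz x y = (if y < x then y else y - 1)"
definition unstd :: "nat \<Rightarrow> nat \<Rightarrow> nat" where "unstd x p = (if p < x then p else Suc p)"
definition rmf :: "nat \<Rightarrow> (nat \<Rightarrow> nat) \<Rightarrow> nat \<Rightarrow> nat" where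
  "rmf x f p = stdz x (remf x f (unstd x p))"

definition C :: "nat \<Rightarrow> (nat \<Rightarrow> nat) \<Rightarrow> nat" where
  "C n f = card ({1..n} // orbS {1..n} f)"

lemma stdz_bij:
  assumes "x \<in> {1..n}"
  shows "bij_betw (stdz x) ({1..n} - {x}) {1..n-1}"
proof (rule bij_betw_imageI)
  show "inj_on (stdz x) ({1..n} - {x})"
    by (rule inj_onI) (auto simp: stdz_def split: if_splits)
  show "stdz x ` ({1..n} - {x}) = {1..n-1}"
  proof
    show "stdz x ` ({1..n} - {x}) \<subseteq> {1..n-1}" using assms by (auto simp: stdz_def)
    show "{1..n-1} \<subseteq> stdz x ` ({1..n} - {x})"
    proof
      fix p assume p: "p \<in> {1..n-1}"
      have "unstd x p \<in> {1..n} - {x}" "stdz x (unstd x p) = p"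
        using p assms by (auto simp: unstd_def stdz_def)
      then show "p \<in> stdz x ` ({1..n} - {x})" by (metis imageI)
    qed
  qed
qed

lemma C_remove:
  assumes p: "perm_on {1..n} f" and x: "x \<in> {1..n}"
  shows "C n f = C (n - 1) (rmf x f) + (if f x = x then 1 else 0)"
    and "perm_on {1..n-1} (rmf x f)"
proof -
  let ?S = "{1..n} - {x}" and ?T = "{1..n-1}" and ?g = "remf x f"
  have pg: "perm_on ?S ?g" by (rule remf_perm[OF p x])
  have h: "bij_betw (stdz x) ?S ?T" by (rule stdz_bij[OF x])
  have un: "unstd x (stdz x y) = y" if "y \<in> ?S" for y
    using that by (auto simp: unstd_def stdz_def)
  have c: "stdz x (?g y) = rmf x f (stdz x y)" if "y \<in> ?S" for y
    using un[OF that] by (simp add: rmf_def)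
  have gS: "?g ` ?S \<subseteq> ?S" using pg by (simp add: perm_on_def)
  have "card (?S // orbS ?S ?g) = card (?T // orbS ?T (rmf x f))"
  proof (rule quot_conj[OF h])
    show "orbS ?S ?g \<subseteq> ?S \<times> ?S" "orbS ?T (rmf x f) \<subseteq> ?T \<times> ?T" unfolding orbS_def by auto
    show "(a, b) \<in> orbS ?S ?g \<longleftrightarrow> (stdz x a, stdz x b) \<in> orbS ?T (rmf x f)"
      if "a \<in> ?S" "b \<in> ?S" for a b
      by (rule orb_conj[OF gS h c that])
  qed
  then show "C n f = C (n - 1) (rmf x f) + (if f x = x then 1 else 0)"
    unfolding C_def using card_remove[OF _ p x] by simp
  show "perm_on ?T (rmf x f)"
  proof -
    have "rmf x f ` ?T \<subseteq> ?T"
    proof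
      fix q assume "q \<in> rmf x f ` ?T"
      then obtain p where pT: "p \<in> ?T" "q = rmf x f p" by auto
      have "p \<in> stdz x ` ?S" using h pT(1) by (simp add: bij_betw_def)
      then obtain y where y: "y \<in> ?S" "p = stdz x y" by (rule imageE) blast
      then have "q = stdz x (?g y)" using c pT by simp
      moreover have "?g y \<in> ?S" using gS y(1) by blast
      ultimately show "q \<in> ?T" using h unfolding bij_betw_def by (metis imageI)
    qed
    moreover have "inj_on (rmf x f) ?T"
    proof (rule inj_onI)
      fix p q assume "p \<in> ?T" "q \<in> ?T" and e: "rmf x f p = rmf x f q"
      then obtain y z where "y \<in> ?S" "p = stdz x y" "z \<in> ?S" "q = stdz x z"
        using h unfolding bij_betw_def by (metis imageE)
      moreover have "?g y \<in> ?S" "?g z \<in> ?S" using gS calculation(1,3) by blast+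
      ultimately show "p = q" using e c h pg unfolding bij_betw_def perm_on_def inj_on_def by metis
    qed
    ultimately show ?thesis by (simp add: perm_on_def)
  qed
qed

lemma C_cong:
  assumes p: "perm_on {1..n} f" and e: "\<And>p. p \<in> {1..n} \<Longrightarrow> g p = f p"
  shows "C n g = C n f"
proof -
  have sub: "f ` {1..n} \<subseteq> {1..n}" using p by (simp add: perm_on_def)
  have "(g ^^ k) a = (f ^^ k) a" if "a \<in> {1..n}" for a k
  proof (induction k)
    case 0 then show ?case by simp
  next
    case (Suc k) then show ?case using e funpow_in[OF sub that, of k] by simp
  qed
  then have "orbS {1..n} g = orbS {1..n} f" unfolding orbS_def by auto
  then show ?thesis by (simp add: C_def)
qed

lemma perm_on_cong:
  assumes p: "perm_on S f" and e: "\<And>p. p \<in> S \<Longrightarrow> g p = f p"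
  shows "perm_on S g"
  using p e unfolding perm_on_def inj_on_def by (auto simp: image_subset_iff)

lemma C_0: "C 0 f = 0" by (simp add: C_def)

lemma cyc_C: "cyc xs = C (length xs) (perm_fun xs)"
  by (simp add: cyc_def C_def orbS_def)



fun invl :: "nat list \<Rightarrow> nat" where
  "invl [] = 0"
| "invl (x # xs) = length (filter (\<lambda>y. y < x) xs) + invl xs"

lemma Inv_Cons: "Inv (x # xs) = length (filter (\<lambda>y. y < x) xs) + Inv xs"
proof -
  let ?P = "\<lambda>ys. {(i, j). 1 \<le> i \<and> i < j \<and> j \<le> length ys \<and> perm_fun ys i > perm_fun ys j}"
  let ?A = "{(i, j). i = 1 \<and> 2 \<le> j \<and> j \<le> Suc (length xs) \<and> xs ! (j - 2) < x}"
  let ?B = "(\<lambda>(i, j). (Suc i, Suc j)) ` ?P xs"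
  have eq: "?P (x # xs) = ?A \<union> ?B"
  proof (rule set_eqI, clarify)
    fix i j
    show "(i, j) \<in> ?P (x # xs) \<longleftrightarrow> (i, j) \<in> ?A \<union> ?B"
    proof (cases "i = 1")
      case True then show ?thesis by (auto simp: perm_fun_def nth_Cons' numeral_2_eq_2)
    next
      case False
      show ?thesis
      proof
        assume "(i, j) \<in> ?P (x # xs)"
        then have h: "2 \<le> i" "i < j" "j \<le> Suc (length xs)" "xs ! (i - 2) > xs ! (j - 2)"
          using False by (auto simp: perm_fun_def nth_Cons' numeral_2_eq_2)
        then have "(i - 1, j - 1) \<in> ?P xs" by (auto simp: perm_fun_def numeral_2_eq_2)
        moreover have "(i, j) = (Suc (i - 1), Suc (j - 1))" using h by auto
        ultimately have "(i, j) \<in> ?B" by (metis (no_types, lifting) case_prod_conv image_eqI)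
        then show "(i, j) \<in> ?A \<union> ?B" by blast
      next
        assume "(i, j) \<in> ?A \<union> ?B"
        then have "(i, j) \<in> ?B" using False by auto
        then obtain a b where "(a, b) \<in> ?P xs" "i = Suc a" "j = Suc b" by auto
        then show "(i, j) \<in> ?P (x # xs)" by (auto simp: perm_fun_def nth_Cons')
      qed
    qed
  qed
  have disj: "?A \<inter> ?B = {}" by auto
  have fin: "finite ?A" "finite ?B"
  proof -
    show "finite ?A" by (rule finite_subset[of _ "{1} \<times> {0..Suc (length xs)}"]) auto
    have "finite (?P xs)" by (rule finite_subset[of _ "{0..length xs} \<times> {0..length xs}"]) auto
    then show "finite ?B" by simp
  qed
  have cB: "card ?B = Inv xs"
    unfolding Inv_def by (rule card_image) (auto simp: inj_on_def)
  have "card ?A = card {j. 2 \<le> j \<and> j \<le> Suc (length xs) \<and> xs ! (j - 2) < x}"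
    by (rule bij_betw_same_card[of snd]) (auto simp: bij_betw_def inj_on_def image_def)
  also have "\<dots> = card {q. q < length xs \<and> xs ! q < x}"
    by (rule bij_betw_same_card[of "\<lambda>j. j - 2"])
       (auto simp: bij_betw_def inj_on_def image_def intro!: exI[of _ "_ + 2"])
  also have "\<dots> = length (filter (\<lambda>y. y < x) xs)" by (simp add: length_filter_conv_card)
  finally have cA: "card ?A = length (filter (\<lambda>y. y < x) xs)" .
  show ?thesis unfolding Inv_def[of "x # xs"] eq card_Un_disjoint[OF fin disj] cA cB ..
qed

lemma Inv_invl: "Inv xs = invl xs"
proof (induction xs)
  case Nil
  have "Inv [] = card ({}::(nat \<times> nat) set)" unfolding Inv_def by (rule arg_cong[where f=card]) auto
  then show ?case by simp
next
  case (Cons x xs) then show ?case by (simp add: Inv_Cons)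
qed

lemma invl_app: "invl (xs @ ys) = invl xs + invl ys + (\<Sum>x\<leftarrow>xs. length (filter (\<lambda>y. y < x) ys))"
  by (induction xs) auto

lemma invl_dsum: "(\<forall>x\<in>set xs. \<forall>y\<in>set ys. x < y) \<Longrightarrow> invl (xs @ ys) = invl xs + invl ys"
proof -
  assume a0: "\<forall>x\<in>set xs. \<forall>y\<in>set ys. x < y"
  then have a: "\<forall>x\<in>set xs. \<forall>y\<in>set ys. \<not> y < x" by (meson less_asym)
  have "(\<Sum>x\<leftarrow>xs. length (filter (\<lambda>y. y < x) ys)) = (\<Sum>x\<leftarrow>xs. 0)"
    by (rule arg_cong[where f=sum_list], rule map_cong) (use a in \<open>auto simp: filter_empty_conv\<close>)
  then show ?thesis by (simp add: invl_app)
qed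

lemma invl_ssum: "(\<forall>x\<in>set xs. \<forall>y\<in>set ys. y < x) \<Longrightarrow> invl (xs @ ys) = invl xs + invl ys + length xs * length ys"
proof -
  assume a: "\<forall>x\<in>set xs. \<forall>y\<in>set ys. y < x"
  have "(\<Sum>x\<leftarrow>xs. length (filter (\<lambda>y. y < x) ys)) = (\<Sum>x\<leftarrow>xs. length ys)"
    by (rule arg_cong[where f=sum_list], rule map_cong) (use a in \<open>auto simp: filter_id_conv\<close>)
  then show ?thesis by (simp add: invl_app sum_list_triv)
qed

lemma invl_map: "invl (map (\<lambda>x. x + c) xs) = invl xs"
  by (induction xs) (auto simp: filter_map comp_def)

lemma delta_Suc: "delta (Suc m) = Suc m # delta m"
  by (simp add: delta_def)

lemma delta_0: "delta 0 = []" by (simp add: delta_def)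

lemma set_delta: "set (delta m) = {1..m}"
  by (auto simp: delta_def)

lemma length_delta[simp]: "length (delta m) = m" by (simp add: delta_def)

lemma invl_delta: "2 * invl (delta m) = m * (m - 1)"
proof (induction m)
  case 0 then show ?case by (simp add: delta_0)
next
  case (Suc m)
  have "length (filter (\<lambda>y. y < Suc m) (delta m)) = m"
    by (simp add: filter_id_conv set_delta)
  then show ?case using Suc by (cases m) (auto simp: delta_Suc)
qed

fun dl :: "int \<Rightarrow> nat list \<Rightarrow> int" where
  "dl c [] = 0"
| "dl c (x # xs) = \<bar>int x - 1 + c\<bar> + dl (c - 1) xs"

lemma dl_sum: "(\<Sum>i = 1..length xs. \<bar>int (perm_fun xs i) - int i + c\<bar>) = dl c xs"
proof (induction xs arbitrary: c)
  case Nil then show ?case by simp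
next
  case (Cons x xs)
  have "(\<Sum>i = 1..length (x # xs). \<bar>int (perm_fun (x # xs) i) - int i + c\<bar>)
      = \<bar>int x - 1 + c\<bar> + (\<Sum>i = Suc 1..Suc (length xs). \<bar>int (perm_fun (x # xs) i) - int i + c\<bar>)"
    by (subst sum.atLeast_Suc_atMost) (simp_all add: perm_fun_def)
  also have "(\<Sum>i = Suc 1..Suc (length xs). \<bar>int (perm_fun (x # xs) i) - int i + c\<bar>)
      = (\<Sum>i = 1..length xs. \<bar>int (perm_fun xs i) - int i + (c - 1)\<bar>)"
    unfolding sum.shift_bounds_cl_Suc_ivl
    by (rule sum.cong) (auto simp: perm_fun_def algebra_simps nth_Cons')
  finally show ?case using Cons by simp
qed

lemma Dsum_dl: "Dsum xs = dl 0 xs"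
  using dl_sum[of xs 0] by (simp add: Dsum_def)

lemma dl_app: "dl c (xs @ ys) = dl c xs + dl (c - int (length xs)) ys"
  by (induction xs arbitrary: c) (auto simp: algebra_simps)

lemma dl_map: "dl c (map (\<lambda>x. x + s) xs) = dl (c + int s) xs"
  by (induction xs arbitrary: c) (auto simp: algebra_simps)

lemma dl_delta:
  "2 * dl c (delta m) = (if \<bar>c\<bar> \<ge> int m then 2 * int m * \<bar>c\<bar> else int m ^ 2 + c ^ 2 - (int m + c) mod 2)"
proof (induction m arbitrary: c)
  case 0 then show ?case by (simp add: delta_0)
next
  case (Suc m)
  have e: "2 * dl c (delta (Suc m)) = 2 * \<bar>int m + c\<bar> + 2 * dl (c - 1) (delta m)"
    by (simp add: delta_Suc algebra_simps)
  have md: "(int m + (c - 1)) mod 2 = (int (Suc m) + c) mod 2"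
  proof -
    have "int (Suc m) + c = (int m + (c - 1)) + 2" by simp
    then show ?thesis by (metis mod_add_self2)
  qed
  let ?M = "int m"
  have cases: "c \<ge> ?M + 1 \<or> c \<le> - ?M - 1 \<or> c = - ?M \<or> (c = 1 - ?M \<and> c \<le> ?M) \<or> (1 - ?M < c \<and> c \<le> ?M)"
    by linarith
  show ?case unfolding e Suc[of "c - 1"] md
  proof -
    from cases show "2 * \<bar>int m + c\<bar> +
    (if int m \<le> \<bar>c - 1\<bar> then 2 * int m * \<bar>c - 1\<bar> else (int m)\<^sup>2 + (c - 1)\<^sup>2 - (int (Suc m) + c) mod 2) =
    (if int (Suc m) \<le> \<bar>c\<bar> then 2 * int (Suc m) * \<bar>c\<bar> else (int (Suc m))\<^sup>2 + c\<^sup>2 - (int (Suc m) + c) mod 2)"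
    proof (elim disjE conjE)
      assume h: "c \<ge> ?M + 1"
      then have "\<bar>c - 1\<bar> = c - 1" "\<bar>c\<bar> = c" "\<bar>?M + c\<bar> = ?M + c" by auto
      then show ?thesis using h by (simp add: algebra_simps)
    next
      assume h: "c \<le> - ?M - 1"
      then have "\<bar>c - 1\<bar> = 1 - c" "\<bar>c\<bar> = - c" "\<bar>?M + c\<bar> = - ?M - c" by auto
      then show ?thesis using h by (simp add: algebra_simps)
    next
      assume h: "c = - ?M"
      have "(int (Suc m) + c) mod 2 = 1" using h by simp
      then show ?thesis using h by (simp add: power2_eq_square algebra_simps)
    next
      assume h: "c = 1 - ?M" "c \<le> ?M"
      have "(int (Suc m) + c) mod 2 = 0" using h by simp
      moreover have "\<bar>c - 1\<bar> = ?M" "\<bar>c\<bar> < ?M + 1" "\<bar>?M + c\<bar> = 1" using h by auto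
      ultimately show ?thesis by (simp add: h(1) power2_eq_square algebra_simps)
    next
      assume h: "1 - ?M < c" "c \<le> ?M"
      have "\<bar>c - 1\<bar> < ?M" "\<bar>c\<bar> < ?M + 1" "\<bar>?M + c\<bar> = ?M + c" using h by auto
      then show ?thesis by (simp add: power2_eq_square algebra_simps)
    qed
  qed
qed



definition isperm :: "nat list \<Rightarrow> bool" where
  "isperm xs \<longleftrightarrow> distinct xs \<and> set xs = {1..length xs}"

lemma isperm_ssum: "isperm a \<Longrightarrow> isperm b \<Longrightarrow> isperm (a \<ominus>\<^sub>p b)"
proof -
  assume a: "isperm a" and b: "isperm b"
  have s: "set (map (\<lambda>x. x + length b) a) = {1 + length b..length a + length b}"
    using a by (simp add: isperm_def image_add_atLeastAtMost')
  have "distinct (map (\<lambda>x. x + length b) a)" using a by (simp add: isperm_def distinct_map inj_on_def)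
  moreover have "set (map (\<lambda>x. x + length b) a) \<inter> set b = {}" using s b by (auto simp: isperm_def)
  moreover have "set (map (\<lambda>x. x + length b) a) \<union> set b = {1..length a + length b}"
    using s b by (auto simp: isperm_def)
  ultimately show ?thesis using b by (simp add: isperm_def skew_sum_def)
qed

lemma isperm_dsum: "isperm a \<Longrightarrow> isperm b \<Longrightarrow> isperm (a \<oplus>\<^sub>p b)"
proof -
  assume a: "isperm a" and b: "isperm b"
  have s: "set (map (\<lambda>x. x + length a) b) = {1 + length a..length b + length a}"
    using b by (simp add: isperm_def image_add_atLeastAtMost')
  have "distinct (map (\<lambda>x. x + length a) b)" using b by (simp add: isperm_def distinct_map inj_on_def)
  moreover have "set a \<inter> set (map (\<lambda>x. x + length a) b) = {}" using s a by (auto simp: isperm_def)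
  moreover have "set a \<union> set (map (\<lambda>x. x + length a) b) = {1..length a + length b}"
    using s a by (auto simp: isperm_def)
  ultimately show ?thesis using a by (simp add: isperm_def direct_sum_def)
qed

lemma isperm_delta: "isperm (delta m)"
  by (auto simp: isperm_def delta_def)

lemma isperm_perm_on: "isperm xs \<Longrightarrow> perm_on {1..length xs} (perm_fun xs)"
  unfolding isperm_def perm_on_def perm_fun_def
proof (intro conjI)
  assume a: "distinct xs \<and> set xs = {1..length xs}"
  show "(\<lambda>i. xs ! (i - 1)) ` {1..length xs} \<subseteq> {1..length xs}"
    using a nth_mem by fastforce
  show "inj_on (\<lambda>i. xs ! (i - 1)) {1..length xs}"
    using a by (auto simp: inj_on_def nth_eq_iff_index_eq)
qed

lemma pf_ssum: "1 \<le> p \<Longrightarrow> p \<le> length a + length b \<Longrightarrow>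
  perm_fun (a \<ominus>\<^sub>p b) p = (if p \<le> length a then perm_fun a p + length b else perm_fun b (p - length a))"
  by (auto simp: perm_fun_def skew_sum_def nth_append)

lemma pf_dsum: "1 \<le> p \<Longrightarrow> p \<le> length a + length b \<Longrightarrow>
  perm_fun (a \<oplus>\<^sub>p b) p = (if p \<le> length a then perm_fun a p else perm_fun b (p - length a) + length a)"
  by (auto simp: perm_fun_def direct_sum_def nth_append)

lemma pf_delta: "1 \<le> p \<Longrightarrow> p \<le> m \<Longrightarrow> perm_fun (delta m) p = m + 1 - p"
  unfolding perm_fun_def delta_def by (subst rev_nth; simp del: upt_Suc)

lemma pf_one: "p \<le> 1 \<Longrightarrow> perm_fun [x] p = x" by (simp add: perm_fun_def)
lemma pf_21: "p \<le> 2 \<Longrightarrow> perm_fun [x, y] p = (if p \<le> 1 then x else y)"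
  by (cases p) (auto simp: perm_fun_def)

lemma len_ssum[simp]: "length (a \<ominus>\<^sub>p b) = length a + length b" by (simp add: skew_sum_def)
lemma len_dsum[simp]: "length (a \<oplus>\<^sub>p b) = length a + length b" by (simp add: direct_sum_def)

definition fd :: "nat \<Rightarrow> nat \<Rightarrow> nat" where "fd m p = m + 1 - p"
definition f2 :: "nat \<Rightarrow> nat \<Rightarrow> nat \<Rightarrow> nat" where
  "f2 i k p = (if p \<le> i then i + k + 2 - p else if p = i + 1 then 1 else i + k + 3 - p)"
definition f3 :: "nat \<Rightarrow> nat \<Rightarrow> nat \<Rightarrow> nat" where
  "f3 i j p = (if p \<le> i then i + j + 2 - p else if p \<le> i + j then i + j + 1 - p else j + 1)"
definition f1 :: "nat \<Rightarrow> nat \<Rightarrow> nat \<Rightarrow> nat" where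
  "f1 j k p = (if p = 1 then j + k + 2 else if p = 2 then j + k + 1 else if p \<le> j + 2 then j + 3 - p else 2 * j + k + 3 - p)"

lemma pf_L2: "p \<in> {1..i+k+1} \<Longrightarrow> perm_fun (delta i \<ominus>\<^sub>p ([1] \<oplus>\<^sub>p delta k)) p = f2 i k p"
  by (auto simp: pf_ssum pf_dsum pf_delta f2_def pf_one)

lemma pf_L3: "p \<in> {1..i+j+1} \<Longrightarrow> perm_fun (delta i \<ominus>\<^sub>p (delta j \<oplus>\<^sub>p [1])) p = f3 i j p"
  by (auto simp: pf_ssum pf_dsum pf_delta f3_def pf_one)

lemma pf_L1: "p \<in> {1..j+k+2} \<Longrightarrow> perm_fun ([2,1] \<ominus>\<^sub>p (delta j \<oplus>\<^sub>p delta k)) p = f1 j k p"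
  by (auto simp: pf_ssum pf_dsum pf_delta f1_def pf_21)

lemma C_step:
  assumes "perm_on {1..n} f" "x \<in> {1..n}" "\<And>p. p \<in> {1..n-1} \<Longrightarrow> rmf x f p = g p"
  shows "C n f = C (n - 1) g + (if f x = x then 1 else 0) \<and> perm_on {1..n-1} g"
proof -
  have p: "perm_on {1..n-1} (rmf x f)" by (rule C_remove(2)[OF assms(1,2)])
  have "C (n - 1) g = C (n - 1) (rmf x f)" by (rule C_cong[OF p]) (use assms(3) in auto)
  moreover have "perm_on {1..n-1} g" by (rule perm_on_cong[OF p]) (use assms(3) in auto)
  ultimately show ?thesis using C_remove(1)[OF assms(1,2)] by simp
qed

fun cnt :: "nat \<Rightarrow> (nat \<Rightarrow> nat) \<Rightarrow> nat" where
  "cnt 0 f = 0"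
| "cnt (Suc n) f = cnt n (rmf (Suc n) f) + (if f (Suc n) = Suc n then 1 else 0)"

lemma C_cnt: "perm_on {1..n} f \<Longrightarrow> C n f = cnt n f"
proof (induction n arbitrary: f)
  case 0 then show ?case by (simp add: C_0)
next
  case (Suc n)
  have "C (Suc n) f = C n (rmf (Suc n) f) + (if f (Suc n) = Suc n then 1 else 0)"
    using C_remove(1)[OF Suc.prems, of "Suc n"] by simp
  moreover have "C n (rmf (Suc n) f) = cnt n (rmf (Suc n) f)"
    using Suc.IH C_remove(2)[OF Suc.prems, of "Suc n"] by simp
  ultimately show ?case by simp
qed

lemma perm_on_list: "isperm xs \<Longrightarrow> length xs = n \<Longrightarrow> (\<And>p. p \<in> {1..n} \<Longrightarrow> perm_fun xs p = f p)
  \<Longrightarrow> perm_on {1..n} f \<and> cyc xs = C n f"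
proof -
  assume a: "isperm xs" "length xs = n" "\<And>p. p \<in> {1..n} \<Longrightarrow> perm_fun xs p = f p"
  have p: "perm_on {1..n} (perm_fun xs)" using isperm_perm_on[OF a(1)] a(2) by simp
  have "perm_on {1..n} f" by (rule perm_on_cong[OF p]) (use a(3) in auto)
  moreover have "C n f = C n (perm_fun xs)" by (rule C_cong[OF p]) (use a(3) in auto)
  ultimately show ?thesis using cyc_C[of xs] a(2) by simp
qed

lemma fd_perm: "perm_on {1..m} (fd m)"
  using perm_on_list[OF isperm_delta[of m], of m "fd m"] by (simp add: pf_delta fd_def)

lemma C_fd: "C m (fd m) = (m + 1) div 2"
proof (induction m rule: less_induct)
  case (less m)
  show ?case
  proof (cases m)
    case 0 then show ?thesis by (simp add: C_0)
  next
    case (Suc m1)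
    show ?thesis
    proof (cases m1)
      case 0
      have "C 1 (fd 1) = cnt 1 (fd 1)" using C_cnt[OF fd_perm] by simp
      moreover have "cnt 1 (fd 1) = 1" by (simp add: fd_def)
      ultimately show ?thesis using Suc 0 by simp
    next
      case (Suc m2)
      have m: "m = Suc (Suc m2)" using \<open>m = Suc m1\<close> Suc by simp
      have s1: "C m (fd m) = C (m - 1) (rmf m (fd m)) + 0 \<and> perm_on {1..m-1} (rmf m (fd m))"
        using C_step[OF fd_perm, of m m "rmf m (fd m)"] m by (simp add: fd_def)
      have pt: "rmf 1 (rmf m (fd m)) p = fd m2 p" if "p \<in> {1..m - 1 - 1}" for p
        using that m by (auto simp: fd_def rmf_def remf_def stdz_def unstd_def)
      have fx: "rmf m (fd m) 1 = 1" using m by (auto simp: fd_def rmf_def remf_def stdz_def unstd_def)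
      have s2: "C (m - 1) (rmf m (fd m)) = C (m - 2) (fd m2) + 1"
        using C_step[OF s1[THEN conjunct2], of 1 "fd m2"] m pt fx by simp
      show ?thesis using s1 s2 less[of m2] m by simp
    qed
  qed
qed

lemma isperm_1: "isperm [1]" by (simp add: isperm_def)
lemma isperm_21: "isperm [2,1]" by (auto simp: isperm_def)

lemma L2_C: "perm_on {1..i+k+1} (f2 i k) \<and> cyc (delta i \<ominus>\<^sub>p ([1] \<oplus>\<^sub>p delta k)) = C (i+k+1) (f2 i k)"
  by (rule perm_on_list[OF isperm_ssum[OF isperm_delta isperm_dsum[OF isperm_1 isperm_delta]]]) (simp, rule pf_L2)

lemma L3_C: "perm_on {1..i+j+1} (f3 i j) \<and> cyc (delta i \<ominus>\<^sub>p (delta j \<oplus>\<^sub>p [1])) = C (i+j+1) (f3 i j)"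
  by (rule perm_on_list[OF isperm_ssum[OF isperm_delta isperm_dsum[OF isperm_delta isperm_1]]]) (simp, rule pf_L3)

lemma L1_C: "perm_on {1..j+k+2} (f1 j k) \<and> cyc ([2,1] \<ominus>\<^sub>p (delta j \<oplus>\<^sub>p delta k)) = C (j+k+2) (f1 j k)"
  by (rule perm_on_list[OF isperm_ssum[OF isperm_21 isperm_dsum[OF isperm_delta isperm_delta]]]) (simp, rule pf_L1)

lemma rmf_lt: "p < x \<Longrightarrow> rmf x f p = stdz x (remf x f p)" by (simp add: rmf_def unstd_def)
lemma rmf_ge: "x \<le> p \<Longrightarrow> rmf x f p = stdz x (remf x f (Suc p))" by (simp add: rmf_def unstd_def)

lemma f2_red: "p \<in> {1..i+k+1} \<Longrightarrow> rmf 1 (rmf (i+k+3) (f2 (Suc i) (Suc k))) p = f2 i k p"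
proof -
  assume p: "p \<in> {1..i+k+1}"
  let ?n = "i+k+3" let ?f = "f2 (Suc i) (Suc k)"
  have g: "rmf ?n ?f q = (if q = 1 then 2 else ?f q)" if "q \<in> {1..?n-1}" for q
    using that by (auto simp: rmf_lt remf_def stdz_def f2_def)
  have "rmf 1 (rmf ?n ?f) p = stdz 1 (remf 1 (rmf ?n ?f) (Suc p))" using p by (simp add: rmf_ge)
  also have "\<dots> = f2 i k p" using p by (auto simp: remf_def g stdz_def f2_def)
  finally show ?thesis .
qed

lemma f3_red: "p \<in> {1..i+j+1} \<Longrightarrow> rmf 1 (rmf (i+j+3) (f3 (Suc i) (Suc j))) p = f3 i j p"
proof -
  assume p: "p \<in> {1..i+j+1}"
  let ?n = "i+j+3" let ?f = "f3 (Suc i) (Suc j)"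
  have g: "rmf ?n ?f q = (if q = 1 then j + 2 else ?f q)" if "q \<in> {1..?n-1}" for q
    using that by (auto simp: rmf_lt remf_def stdz_def f3_def)
  have "rmf 1 (rmf ?n ?f) p = stdz 1 (remf 1 (rmf ?n ?f) (Suc p))" using p by (simp add: rmf_ge)
  also have "\<dots> = f3 i j p" using p by (auto simp: remf_def g stdz_def f3_def)
  finally show ?thesis .
qed

lemma C_f2: "C (i+k+1) (f2 i k) = (if i \<le> k then 1 + (k - i + 1) div 2 else 1 + (i - k) div 2)"
proof (induction i arbitrary: k)
  case 0
  have pt: "rmf 1 (f2 0 k) p = fd k p" if "p \<in> {1..k+1-1}" for p
    using that by (auto simp: f2_def fd_def rmf_ge remf_def stdz_def)
  have "C (k+1) (f2 0 k) = C k (fd k) + 1"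
    using C_step[OF L2_C[THEN conjunct1, of 0 k], of 1 "fd k"] pt by (simp add: f2_def)
  then show ?case by (simp add: C_fd)
next
  case (Suc i)
  show ?case
  proof (cases k)
    case 0
    have "C (Suc i + k + 1) (f2 (Suc i) k) = C (Suc i + k + 1) (fd (Suc i + k + 1))"
      by (rule C_cong[OF fd_perm]) (auto simp: 0 f2_def fd_def)
    then show ?thesis using 0 by (simp add: C_fd)
  next
    case (Suc k')
    let ?n = "i + k' + 3" let ?f = "f2 (Suc i) (Suc k')"
    have e: "Suc i + Suc k' + 1 = ?n" by simp
    have pf: "perm_on {1..?n} ?f" using L2_C[THEN conjunct1, of "Suc i" "Suc k'", unfolded e] .
    have s1: "C ?n ?f = C (?n - 1) (rmf ?n ?f) + 0 \<and> perm_on {1..?n-1} (rmf ?n ?f)"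
      using C_step[OF pf, of ?n "rmf ?n ?f"] by (simp add: f2_def)
    have fx: "rmf ?n ?f 1 \<noteq> 1" by (simp add: f2_def rmf_lt remf_def stdz_def)
    have s2: "C (?n - 1) (rmf ?n ?f) = C (i + k' + 1) (f2 i k')"
      using C_step[OF s1[THEN conjunct2], of 1 "f2 i k'"] f2_red[of _ i k'] fx by simp
    show ?thesis using s1 s2 Suc.IH[of k'] Suc by (simp add: numeral_3_eq_3)
  qed
qed

lemma C_f3: "C (i+j+1) (f3 i j) = (if i \<le> j then 1 + (j - i + 1) div 2 else 1 + (i - j) div 2)"
proof (induction i arbitrary: j)
  case 0
  have pt: "rmf (j+1) (f3 0 j) p = fd j p" if "p \<in> {1..j+1-1}" for p
    using that by (auto simp: f3_def fd_def rmf_lt remf_def stdz_def)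
  have "C (j+1) (f3 0 j) = C j (fd j) + 1"
    using C_step[OF L3_C[THEN conjunct1, of 0 j], of "j+1" "fd j"] pt by (simp add: f3_def)
  then show ?case by (simp add: C_fd)
next
  case (Suc i)
  show ?case
  proof (cases j)
    case 0
    have "C (Suc i + j + 1) (f3 (Suc i) j) = C (Suc i + j + 1) (fd (Suc i + j + 1))"
      by (rule C_cong[OF fd_perm]) (auto simp: 0 f3_def fd_def)
    then show ?thesis using 0 by (simp add: C_fd)
  next
    case (Suc j')
    let ?n = "i + j' + 3" let ?f = "f3 (Suc i) (Suc j')"
    have e: "Suc i + Suc j' + 1 = ?n" by simp
    have pf: "perm_on {1..?n} ?f" using L3_C[THEN conjunct1, of "Suc i" "Suc j'", unfolded e] .
    have s1: "C ?n ?f = C (?n - 1) (rmf ?n ?f) + 0 \<and> perm_on {1..?n-1} (rmf ?n ?f)"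
      using C_step[OF pf, of ?n "rmf ?n ?f"] by (simp add: f3_def)
    have fx: "rmf ?n ?f 1 \<noteq> 1" by (simp add: f3_def rmf_lt remf_def stdz_def)
    have s2: "C (?n - 1) (rmf ?n ?f) = C (i + j' + 1) (f3 i j')"
      using C_step[OF s1[THEN conjunct2], of 1 "f3 i j'"] f3_red[of _ i j'] fx by simp
    show ?thesis using s1 s2 Suc.IH[of j'] Suc by (simp add: numeral_3_eq_3)
  qed
qed

lemma f1_j4: assumes j: "j \<ge> 4" and p: "p \<in> {1..j+k}"
  shows "rmf 3 (rmf j (f1 j k)) p = f1 (j - 2) k p"
proof -
  let ?f = "f1 j k"
  define G where "G q = (if q = 1 then j+k+1 else if q = 2 then j+k else if q = 3 then 3
     else if q < j then j+3-q else if q \<le> j+1 then j+2-q else 2*j+k+1-q)" for q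
  have g: "rmf j ?f q = G q" if q: "q \<in> {1..j+k+1}" for q
  proof -
    consider "q < j" | "q \<ge> j" by linarith
    then show ?thesis
    proof cases
      case 1
      then have "rmf j ?f q = stdz j (remf j ?f q)" by (simp add: rmf_lt)
      then show ?thesis using 1 q j by (auto simp: remf_def stdz_def f1_def G_def)
    next
      case 2
      then have "rmf j ?f q = stdz j (remf j ?f (Suc q))" by (simp add: rmf_ge)
      then show ?thesis using 2 q j by (auto simp: remf_def stdz_def f1_def G_def)
    qed
  qed
  have G3: "G q = 3 \<longleftrightarrow> q = 3" if "q \<in> {1..j+k+1}" for q using that j by (auto simp: G_def)
  consider "p < 3" | "p \<ge> 3" by linarith
  then show ?thesis
  proof cases
    case 1
    then have "rmf 3 (rmf j ?f) p = stdz 3 (G p)" using p G3 g by (simp add: rmf_lt remf_def)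
    then show ?thesis using 1 p j by (auto simp: stdz_def G_def f1_def)
  next
    case 2
    then have "rmf 3 (rmf j ?f) p = stdz 3 (G (Suc p))" using p G3 g by (simp add: rmf_ge remf_def)
    then show ?thesis using 2 p j by (auto simp: stdz_def G_def f1_def)
  qed
qed
lemma f1_k4: assumes k: "k \<ge> 4" and p: "p \<in> {1..j+k}"
  shows "rmf (j+3) (rmf (j+k) (f1 j k)) p = f1 j (k - 2) p"
proof -
  let ?f = "f1 j k"
  define G where "G q = (if q = 1 then j+k+1 else if q = 2 then j+k else if q \<le> j+2 then j+3-q
     else if q = j+3 then j+3 else if q < j+k then 2*j+k+3-q else 2*j+k+2-q)" for q
  have g: "rmf (j+k) ?f q = G q" if q: "q \<in> {1..j+k+1}" for q
  proof -
    consider "q < j+k" | "q \<ge> j+k" by linarith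
    then show ?thesis
    proof cases
      case 1
      then have "rmf (j+k) ?f q = stdz (j+k) (remf (j+k) ?f q)" by (simp add: rmf_lt)
      then show ?thesis using 1 q k by (auto simp: remf_def stdz_def f1_def G_def)
    next
      case 2
      then have "rmf (j+k) ?f q = stdz (j+k) (remf (j+k) ?f (Suc q))" by (simp add: rmf_ge)
      then show ?thesis using 2 q k by (auto simp: remf_def stdz_def f1_def G_def)
    qed
  qed
  have G3: "G q = j+3 \<longleftrightarrow> q = j+3" if "q \<in> {1..j+k+1}" for q using that k by (auto simp: G_def)
  consider "p < j+3" | "p \<ge> j+3" by linarith
  then show ?thesis
  proof cases
    case 1
    then have "rmf (j+3) (rmf (j+k) ?f) p = stdz (j+3) (G p)" using p G3 g by (simp add: rmf_lt remf_def)
    then show ?thesis using 1 p k by (auto simp: stdz_def G_def f1_def)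
  next
    case 2
    then have "rmf (j+3) (rmf (j+k) ?f) p = stdz (j+3) (G (Suc p))" using p G3 g by (simp add: rmf_ge remf_def)
    then show ?thesis using 2 p k by (auto simp: stdz_def G_def f1_def)
  qed
qed
lemma f1_j3: assumes "p \<in> {1..k+4}"
  shows "rmf 3 (f1 3 k) p = f1 2 k p"
  using assms by (auto simp: rmf_lt rmf_ge remf_def stdz_def f1_def)

lemma f1_k3: assumes "p \<in> {1..j+4}"
  shows "rmf (j+3) (f1 j 3) p = f1 j 2 p"
  using assms by (auto simp: rmf_lt rmf_ge remf_def stdz_def f1_def)



lemma C_two:
  assumes pf: "perm_on {1..n} f" and x: "x \<in> {1..n}" "f x \<noteq> x" and y: "y \<in> {1..n-1}" "rmf x f y = y"
    and h: "\<And>p. p \<in> {1..n-2} \<Longrightarrow> rmf y (rmf x f) p = h p"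
  shows "C n f = C (n - 2) h + 1"
proof -
  have s1: "C n f = C (n - 1) (rmf x f) + 0 \<and> perm_on {1..n-1} (rmf x f)"
    using C_step[OF pf x(1), of "rmf x f"] x(2) by simp
  have e: "n - 1 - 1 = n - 2" by simp
  have h': "rmf y (rmf x f) p = h p" if "p \<in> {1..n-1-1}" for p using h that unfolding e .
  have s2: "C (n - 1) (rmf x f) = C (n - 1 - 1) h + 1"
    using C_step[OF s1[THEN conjunct2] y(1), of h] h' y(2) by simp
  show ?thesis using s1 s2 unfolding e by simp
qed

lemma C_one:
  assumes pf: "perm_on {1..n} f" and x: "x \<in> {1..n}" "f x = x"
    and h: "\<And>p. p \<in> {1..n-1} \<Longrightarrow> rmf x f p = h p"
  shows "C n f = C (n - 1) h + 1"
  using C_step[OF pf x(1), of h] x(2) h by simp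

definition c1 :: "nat \<Rightarrow> nat \<Rightarrow> nat" where
  "c1 j k = (j + 1) div 2 + (k + 1) div 2 + 1 - (if 1 \<le> j \<and> 1 \<le> k then 2 else 0)"

lemma f1_perm: "perm_on {1..j+k+2} (f1 j k)" using L1_C by blast

lemma C_f1_base: "j \<in> {1,2} \<Longrightarrow> k \<in> {1,2} \<Longrightarrow> C (j+k+2) (f1 j k) = 1"
proof -
  assume a: "j \<in> {1,2}" "k \<in> {1,2}"
  have "C (j+k+2) (f1 j k) = cnt (j+k+2) (f1 j k)" by (rule C_cnt[OF f1_perm])
  also have "\<dots> = 1" using a
    by (auto simp: eval_nat_numeral f1_def rmf_def remf_def stdz_def unstd_def)
  finally show ?thesis .
qed

lemma C_f1_small: "j \<le> 2 \<Longrightarrow> C (j+k+2) (f1 j k) = c1 j k"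
proof (induction k rule: less_induct)
  case (less k)
  show ?case
  proof (cases "j = 0 \<or> k = 0")
    case True
    have "C (j+k+2) (f1 j k) = C (j+k+2) (fd (j+k+2))"
      by (rule C_cong[OF fd_perm]) (use True in \<open>auto simp: f1_def fd_def\<close>)
    then show ?thesis using True by (auto simp: C_fd c1_def)
  next
    case False
    then have j: "j \<in> {1,2}" using less.prems by auto
    consider "k \<in> {1,2}" | "k = 3" | "k \<ge> 4" using False by force
    then show ?thesis
    proof cases
      case 1 then show ?thesis using C_f1_base[OF j 1] j by (auto simp: c1_def)
    next
      case 2
      have "C (j+k+2) (f1 j k) = C (j+k+2-1) (f1 j 2) + 1"
        by (rule C_one[OF f1_perm, of "j+3"]) (use 2 f1_k3 in \<open>auto simp: f1_def\<close>)
      also have "j+k+2-1 = j+2+2" using 2 by simp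
      finally show ?thesis using less.IH[of 2] 2 less.prems j by (auto simp: c1_def)
    next
      case 3
      have "C (j+k+2) (f1 j k) = C (j+k+2-2) (f1 j (k-2)) + 1"
      proof (rule C_two[OF f1_perm, where x="j+k" and y="j+3"])
        show "j + k \<in> {1..j+k+2}" "f1 j k (j + k) \<noteq> j + k" "j + 3 \<in> {1..j+k+2-1}"
          using 3 by (auto simp: f1_def)
        show "rmf (j + k) (f1 j k) (j + 3) = j + 3"
          using 3 by (auto simp: rmf_lt remf_def stdz_def f1_def)
        show "rmf (j + 3) (rmf (j + k) (f1 j k)) p = f1 j (k - 2) p" if "p \<in> {1..j+k+2-2}" for p
          using f1_k4[OF 3, of p j] that by simp
      qed
      also have "j+k+2-2 = j+(k-2)+2" using 3 by simp
      finally show ?thesis using less.IH[of "k-2"] 3 less.prems j by (auto simp: c1_def)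
    qed
  qed
qed

lemma C_f1: "C (j+k+2) (f1 j k) = c1 j k"
proof (induction j rule: less_induct)
  case (less j)
  consider "j \<le> 2" | "j = 3" | "j \<ge> 4" by force
  then show ?case
  proof cases
    case 1 then show ?thesis by (rule C_f1_small)
  next
    case 2
    have "C (j+k+2) (f1 j k) = C (j+k+2-1) (f1 2 k) + 1"
      by (rule C_one[OF f1_perm, of 3]) (use 2 f1_j3 in \<open>auto simp: f1_def\<close>)
    also have "j+k+2-1 = 2+k+2" using 2 by simp
    finally show ?thesis using less.IH[of 2] 2 by (auto simp: c1_def)
  next
    case 3
    have "C (j+k+2) (f1 j k) = C (j+k+2-2) (f1 (j-2) k) + 1"
    proof (rule C_two[OF f1_perm, where x=j and y=3])
      show "j \<in> {1..j+k+2}" "f1 j k j \<noteq> j" "3 \<in> {1..j+k+2-1}"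
        using 3 by (auto simp: f1_def)
      show "rmf j (f1 j k) 3 = 3"
        using 3 by (auto simp: rmf_lt remf_def stdz_def f1_def)
      show "rmf 3 (rmf j (f1 j k)) p = f1 (j - 2) k p" if "p \<in> {1..j+k+2-2}" for p
        using f1_j4[OF 3, of p k] that by simp
    qed
    also have "j+k+2-2 = (j-2)+k+2" using 3 by simp
    moreover have dj: "Suc j div 2 = Suc (Suc (j - 2) div 2)" using 3 by presburger
    ultimately show ?thesis using less.IH[of "j-2"] 3 dj by (auto simp: c1_def)
  qed
qed



lemma dl_small: "\<bar>c\<bar> \<le> int m + 1 \<Longrightarrow> 2 * dl c (delta m) = int m ^ 2 + c ^ 2 - (int m + c) mod 2"
proof -
  assume a: "\<bar>c\<bar> \<le> int m + 1"
  show ?thesis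
  proof (cases "\<bar>c\<bar> \<ge> int m")
    case False then show ?thesis using dl_delta[of c m] by simp
  next
    case True
    then have "\<bar>c\<bar> = int m \<or> \<bar>c\<bar> = int m + 1" using a by linarith
    then show ?thesis using dl_delta[of c m] True
    proof (elim disjE)
      assume h: "\<bar>c\<bar> = int m"
      then have "c = int m \<or> c = - int m" by linarith
      moreover have "(int m + int m) mod 2 = 0" "(int m + - int m) mod 2 = 0" by presburger+
      ultimately show ?thesis using dl_delta[of c m] h by (auto simp: power2_eq_square)
    next
      assume h: "\<bar>c\<bar> = int m + 1"
      then have "c = int m + 1 \<or> c = - int m - 1" by linarith
      then show ?thesis
      proof
        assume c: "c = int m + 1"
        have "(int m + (int m + 1)) mod 2 = 1" by presburger
        then show ?thesis using dl_delta[of c m] h by (simp add: c power2_eq_square algebra_simps)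
      next
        assume c: "c = - int m - 1"
        have "(int m + (- int m - 1)) mod 2 = 1" by presburger
        then show ?thesis using dl_delta[of c m] h by (simp add: c power2_eq_square algebra_simps)
      qed
    qed
  qed
qed

lemma dl_big: "\<bar>c\<bar> \<ge> int m \<Longrightarrow> dl c (delta m) = int m * \<bar>c\<bar>"
  using dl_delta[of c m] by simp

lemma invl_delta_int: "2 * int (invl (delta m)) = int m * (int m - 1)"
proof -
  have "int (2 * invl (delta m)) = int (m * (m - 1))" using invl_delta[of m] by simp
  then show ?thesis by (cases m) (auto simp: algebra_simps)
qed

lemma invl_mono: "strict_mono f \<Longrightarrow> invl (map f xs) = invl xs"
proof (induction xs)
  case Nil then show ?case by simp
next
  case (Cons x xs)
  have "filter (\<lambda>y. y < f x) (map f xs) = map f (filter (\<lambda>y. y < x) xs)"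
    using Cons.prems by (simp add: filter_map comp_def strict_mono_less)
  then show ?case using Cons by simp
qed

lemma invl_map_Suc: "invl (map Suc xs) = invl xs"
  using invl_map[of 1 xs] by (simp add: comp_def)

lemma set_map_add: "set (map (\<lambda>x. x + c) xs) = (\<lambda>x. x + c) ` set xs" by simp

lemma shallow_gen:
  assumes inv: "Inv L = invl (delta i) + invl (delta k) + i * (k + 1)"
    and D: "Dsum L = dl (int k + 1) (delta i) + int i + dl (- int i) (delta k)"
    and cy: "cyc L = (if i \<le> k then 1 + (k - i + 1) div 2 else 1 + (i - k) div 2)"
    and len: "length L = i + k + 1"
  shows "shallow L"
proof -
  let ?L = L
  show ?thesis
  proof (cases "i \<le> k")
    case True
    obtain d where kd: "k = i + d" using True le_Suc_ex by blast
    have D1: "dl (int k + 1) (delta i) = int i * (int k + 1)" by (rule dl_big[THEN trans]) (use True in auto)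
    have D2: "2 * dl (- int i) (delta k) = int k ^ 2 + int i ^ 2 - (int k - int i) mod 2"
      using dl_small[of "- int i" k] True by simp
    consider e where "d = 2 * e" | e where "d = 2 * e + 1" by (metis oddE evenE)
    then show ?thesis
    proof cases
      case 1
      have "(int k - int i) mod 2 = 0" using kd 1 by simp
      moreover have "cyc ?L = 1 + e" using cy True kd 1 by simp
      ultimately show ?thesis using inv D D1 D2 invl_delta_int[of i] invl_delta_int[of k] kd 1
        unfolding shallow_def Tcyc_def len
        by (simp add: algebra_simps power2_eq_square)
    next
      case 2
      have "(int k - int i) mod 2 = 1" using kd 2 by simp
      moreover have "cyc ?L = 2 + e" using cy True kd 2 by simp
      ultimately show ?thesis using inv D D1 D2 invl_delta_int[of i] invl_delta_int[of k] kd 2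
        unfolding shallow_def Tcyc_def len
        by (simp add: algebra_simps power2_eq_square)
    qed
  next
    case False
    obtain d where kd: "i = k + d" "d \<ge> 1" using False by (metis le_add_diff_inverse less_imp_le_nat not_le zero_less_diff less_one not_less)
    have D1: "2 * dl (int k + 1) (delta i) = int i ^ 2 + (int k + 1) ^ 2 - (int i + int k + 1) mod 2"
      using dl_small[of "int k + 1" i] False by (simp add: algebra_simps)
    have D2: "dl (- int i) (delta k) = int k * int i" using dl_big[of k "- int i"] False by simp
    consider e where "d = 2 * e" | e where "d = 2 * e + 1" by (metis oddE evenE)
    then show ?thesis
    proof cases
      case 1
      have "(int i + int k + 1) mod 2 = 1" using kd 1 by presburger
      moreover have "cyc ?L = 1 + e" using cy False kd 1 by simp
      ultimately show ?thesis using inv D D1 D2 invl_delta_int[of i] invl_delta_int[of k] kd 1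
        unfolding shallow_def Tcyc_def len
        by (simp add: algebra_simps power2_eq_square)
    next
      case 2
      have "(int i + int k + 1) mod 2 = 0" using kd 2 by presburger
      moreover have "cyc ?L = 1 + e" using cy False kd 2 by simp
      ultimately show ?thesis using inv D D1 D2 invl_delta_int[of i] invl_delta_int[of k] kd 2
        unfolding shallow_def Tcyc_def len
        by (simp add: algebra_simps power2_eq_square)
    qed
  qed
qed

lemma shallow_L2: "shallow (delta i \<ominus>\<^sub>p ([1] \<oplus>\<^sub>p delta k))"
proof (rule shallow_gen)
  let ?L = "delta i \<ominus>\<^sub>p ([1] \<oplus>\<^sub>p delta k)"
  show inv: "Inv ?L = invl (delta i) + invl (delta k) + i * (k + 1)"
  proof -
    have d: "invl ([1] \<oplus>\<^sub>p delta k) = invl (delta k)"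
      unfolding direct_sum_def by (subst invl_dsum) (auto simp: set_delta invl_map invl_map_Suc)
    have "invl ?L = invl (delta i) + invl ([1] \<oplus>\<^sub>p delta k) + i * (k + 1)"
      unfolding skew_sum_def
      by (subst invl_ssum) (auto simp: set_delta invl_mono strict_mono_def direct_sum_def)
    then show ?thesis using d by (simp add: Inv_invl)
  qed
  show D: "Dsum ?L = dl (int k + 1) (delta i) + int i + dl (- int i) (delta k)"
    unfolding Dsum_dl skew_sum_def direct_sum_def dl_app dl_map by (simp add: algebra_simps)
  show cy: "cyc ?L = (if i \<le> k then 1 + (k - i + 1) div 2 else 1 + (i - k) div 2)"
    using L2_C[of i k] C_f2[of i k] by simp
  show len: "length ?L = i + k + 1" by simp
qed

lemma shallow_L3: "shallow (delta i \<ominus>\<^sub>p (delta k \<oplus>\<^sub>p [1]))"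
proof (rule shallow_gen)
  let ?L = "delta i \<ominus>\<^sub>p (delta k \<oplus>\<^sub>p [1])"
  show "Inv ?L = invl (delta i) + invl (delta k) + i * (k + 1)"
  proof -
    have d: "invl (delta k \<oplus>\<^sub>p [1]) = invl (delta k)"
      unfolding direct_sum_def by (subst invl_dsum) (auto simp: set_delta)
    have "invl ?L = invl (delta i) + invl (delta k \<oplus>\<^sub>p [1]) + i * (k + 1)"
      unfolding skew_sum_def
      by (subst invl_ssum) (auto simp: set_delta invl_mono strict_mono_def direct_sum_def)
    then show ?thesis using d by (simp add: Inv_invl)
  qed
  show "Dsum ?L = dl (int k + 1) (delta i) + int i + dl (- int i) (delta k)"
    unfolding Dsum_dl skew_sum_def direct_sum_def dl_app dl_map by (simp add: algebra_simps)
  show "cyc ?L = (if i \<le> k then 1 + (k - i + 1) div 2 else 1 + (i - k) div 2)"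
    using L3_C[of i k] C_f3[of i k] by simp
  show "length ?L = i + k + 1" by simp
qed

lemma dl_m2: "2 * dl (-2) (delta m) = (if m = 0 then 0 else int m ^ 2 + 4 - int m mod 2)"
proof (cases "m = 0")
  case True then show ?thesis by (simp add: delta_0)
next
  case False
  have "(int m + -2) mod 2 = int m mod 2" by presburger
  then show ?thesis using dl_small[of "-2" m] False by simp
qed

lemma c1_cases: "2 * int (c1 j k) = (if j = 0 \<and> k = 0 then 2 else if j = 0 then int k + int k mod 2 + 2
   else if k = 0 then int j + int j mod 2 + 2 else int j + int j mod 2 + int k + int k mod 2 - 2)"
proof -
  have a: "2 * ((j + 1) div 2) = j + j mod 2" "2 * ((k + 1) div 2) = k + k mod 2" by presburger+
  have b: "int j mod 2 = int (j mod 2)" "int k mod 2 = int (k mod 2)" by (simp_all add: zmod_int)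
  show ?thesis unfolding c1_def b using a by (cases "j = 0"; cases "k = 0") (simp_all, linarith?)
qed

lemma arith1:
  fixes j k :: nat
  shows "2 + int j * (int j - 1) + int k * (int k - 1) + 4 * (int j + int k) + 2 * (int j + int k + 2) - 2 * int (c1 j k)
    = 2 * \<bar>int j + int k + 1\<bar> + 2 * \<bar>int j + int k - 1\<bar>
      + (if j = 0 then 0 else int j ^ 2 + 4 - int j mod 2) + (if k = 0 then 0 else int k ^ 2 + 4 - int k mod 2)"
proof (cases "j = 0"; cases "k = 0")
qed (simp_all add: c1_cases algebra_simps power2_eq_square)
lemma shallow_L1: "shallow ([2,1] \<ominus>\<^sub>p (delta j \<oplus>\<^sub>p delta k))"
proof -
  let ?L = "[2,1] \<ominus>\<^sub>p (delta j \<oplus>\<^sub>p delta k)"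
  have inv: "Inv ?L = 1 + invl (delta j) + invl (delta k) + 2 * (j + k)"
  proof -
    have d: "invl (delta j \<oplus>\<^sub>p delta k) = invl (delta j) + invl (delta k)"
      unfolding direct_sum_def by (subst invl_dsum) (auto simp: set_delta invl_map)
    have "invl ?L = invl [2,1] + invl (delta j \<oplus>\<^sub>p delta k) + 2 * (j + k)"
      unfolding skew_sum_def
      by (subst invl_ssum) (auto simp: set_delta invl_mono strict_mono_def direct_sum_def)
    then show ?thesis using d by (simp add: Inv_invl)
  qed
  have D: "Dsum ?L = \<bar>int j + int k + 1\<bar> + \<bar>int j + int k - 1\<bar> + dl (-2) (delta j) + dl (-2) (delta k)"
    unfolding Dsum_dl skew_sum_def direct_sum_def dl_app dl_map by (simp add: algebra_simps)
  have cy: "cyc ?L = c1 j k" using L1_C[of j k] C_f1[of j k] by simp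
  have len: "length ?L = j + k + 2" by simp
  have Dj: "2 * dl (-2) (delta j) = (if j = 0 then 0 else int j ^ 2 + 4 - int j mod 2)" by (rule dl_m2)
  have Dk: "2 * dl (-2) (delta k) = (if k = 0 then 0 else int k ^ 2 + 4 - int k mod 2)" by (rule dl_m2)
  have Ij: "2 * int (invl (delta j)) = int j * (int j - 1)" by (rule invl_delta_int)
  have Ik: "2 * int (invl (delta k)) = int k * (int k - 1)" by (rule invl_delta_int)
  have goal: "2 * (int (Inv ?L) + Tcyc ?L) = 2 * Dsum ?L"
  proof -
    have "2 * (int (Inv ?L) + Tcyc ?L) = 2 + 2 * int (invl (delta j)) + 2 * int (invl (delta k))
       + 4 * (int j + int k) + 2 * (int j + int k + 2) - 2 * int (c1 j k)"
      unfolding inv Tcyc_def cy len by (simp add: algebra_simps)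
    also have "\<dots> = 2 + int j * (int j - 1) + int k * (int k - 1) + 4 * (int j + int k) + 2 * (int j + int k + 2) - 2 * int (c1 j k)"
      by (simp only: Ij Ik)
    also have "\<dots> = 2 * \<bar>int j + int k + 1\<bar> + 2 * \<bar>int j + int k - 1\<bar>
      + (if j = 0 then 0 else int j ^ 2 + 4 - int j mod 2) + (if k = 0 then 0 else int k ^ 2 + 4 - int k mod 2)"
      by (rule arith1)
    also have "\<dots> = 2 * Dsum ?L" unfolding D Dj[symmetric] Dk[symmetric] by (simp add: algebra_simps)
    finally show ?thesis .
  qed
  then show ?thesis unfolding shallow_def by simp
qed


theorem lemma4p2:
  fixes i j k :: nat
  shows "shallow ([2, 1] \<ominus>\<^sub>p (delta j \<oplus>\<^sub>p delta k)) \<and>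
         shallow (delta i \<ominus>\<^sub>p ([1] \<oplus>\<^sub>p delta k)) \<and>
         shallow (delta i \<ominus>\<^sub>p (delta j \<oplus>\<^sub>p [1]))"
  using shallow_L1[of j k] shallow_L2[of i k] shallow_L3[of i j] by blast

end
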